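(* There exist a finite action set $\mathcal{A}$, a utility function $u:\mathcal{A}\times\{0,1\}\to[-1,1]$ and a constant $c>0$ such that for infinitely many horizons $T$ there are outcomes $\mathbf{x}\in\{0,1\}^T$ and forecasts $\mathbf{p}\in[0,1]^T$ with $$\mathrm{Reg}(\mathbf{p},\mathbf{x})\le -cT \quad\text{and}\quad \mathrm{AgentReg}_u(\mathbf{p},\mathbf{x})\ge cT.$$ (That is, $\mathrm{Reg}(\mathbf p,\mathbf x)=-\Omega(T)$ while $\mathrm{AgentReg}_u(\mathbf p,\mathbf x)=\Omega(T)$.)
   Context: Binary setting. For outcomes $\mathbf{x}=(x_1,\dots,x_T)\in\{0,1\}^T$ and forecasts $\mathbf{p}=(p_1,\dots,p_T)\in[0,1]^T$, the base rate is $\beta=\frac1T\sum_{t=1}^T x_t$. For a scoring rule $\ell:[0,1]\times\{0,1\}\to\mathbb{R}$, $\mathrm{Reg}_\ell(\mathbf p,\mathbf x)=\sum_{t=1}^T\ell(p_t,x_t)-\sum_{t=1}^T\ell(\beta,x_t)$. The Brier score is $\ell_{sq}(p,x)=(x-p)^2$ and $\mathrm{Reg}(\mathbf p,\mathbf x)=\mathrm{Reg}_{\ell_{sq}}(\mathbf p,\mathbf x)$. An agent with finite action set $\mathcal A$ and utility $u:\mathcal A\times\{0,1\}\to[-1,1]$ responds to a forecast $p$ with an action $a(p)\in\arg\max_{a\in\mathcal A}\mathbb{E}_{x\sim\mathrm{Ber}(p)}[u(a,x)]$ (fixed tie-breaking), and $\mathrm{AgentReg}_u(\mathbf p,\mathbf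 x)=\sum_{t=1}^T u(a(\beta),x_t)-\sum_{t=1}^T u(a(p_t),x_t)$. *)

theory Defs
  imports Complex_Main
begin

text \<open>Outcomes are x :: nat \<Rightarrow> nat with x t \<in> {0,1} for t < T; forecasts p :: nat \<Rightarrow> real
  with p t \<in> [0,1]; rounds are indexed by t \<in> {0..<T}.\<close>

definition base_rate :: "nat \<Rightarrow> (nat \<Rightarrow> nat) \<Rightarrow> real" where
  "base_rate T x = (\<Sum>t<T. real (x t)) / real T"

definition brier :: "real \<Rightarrow> nat \<Rightarrow> real" where
  "brier p x = (real x - p)^2"

definition Reg :: "nat \<Rightarrow> (nat \<Rightarrow> real) \<Rightarrow> (nat \<Rightarrow> nat) \<Rightarrow> real" where
  "Reg T p x = (\<Sum>t<T. brier (p t) (x t)) - (\<Sum>t<T. brier (base_rate T x) (x t))"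

definition exp_util :: "('a \<Rightarrow> nat \<Rightarrow> real) \<Rightarrow> 'a \<Rightarrow> real \<Rightarrow> real" where
  "exp_util u a p = p * u a 1 + (1 - p) * u a 0"

definition best_response :: "'a set \<Rightarrow> ('a \<Rightarrow> nat \<Rightarrow> real) \<Rightarrow> (real \<Rightarrow> 'a) \<Rightarrow> bool" where
  "best_response A u ar \<longleftrightarrow>
     (\<forall>p\<in>{0..1}. ar p \<in> A \<and> (\<forall>b\<in>A. exp_util u b p \<le> exp_util u (ar p) p))"

definition AgentReg :: "('a \<Rightarrow> nat \<Rightarrow> real) \<Rightarrow> (real \<Rightarrow> 'a) \<Rightarrow> nat \<Rightarrow> (nat \<Rightarrow> real) \<Rightarrow> (nat \<Rightarrow> nat) \<Rightarrow> real" where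
  "AgentReg u ar T p x =
     (\<Sum>t<T. u (ar (base_rate T x)) (x t)) - (\<Sum>t<T. u (ar (p t)) (x t))"

end

theory Submission
  imports Defs
begin

lemma sum4: "(\<Sum>t<4*k. f (t mod 4)) = real k * (f 0 + f 1 + f 2 + f (3::nat))"
proof (induction k)
  case 0 then show ?case by simp
next
  case (Suc k)
  have e: "4 * Suc k = Suc (Suc (Suc (Suc (4*k))))" by simp
  have m: "(4*k) mod 4 = 0" "Suc (4*k) mod 4 = 1" "Suc (Suc (4*k)) mod 4 = 2"
     "Suc (Suc (Suc (4*k))) mod 4 = 3" by presburger+
  have "(\<Sum>t<4 * Suc k. f (t mod 4)) = (\<Sum>t<4*k. f (t mod 4)) + f 0 + f 1 + f 2 + f 3"
    unfolding e sum.lessThan_Suc m by simp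
  also have "\<dots> = real (Suc k) * (f 0 + f 1 + f 2 + f 3)"
    unfolding Suc.IH by (simp add: distrib_right)
  finally show ?case .
qed

definition uu :: "nat \<Rightarrow> nat \<Rightarrow> real" where
  "uu a y = (if a = 1 then (if y = 1 then 1/2 else -3/5)
            else if a = 2 then (if y = 1 then -3/5 else 1/2) else 0)"

definition xs :: "nat \<Rightarrow> nat" where "xs j = (if j = 0 \<or> j = 2 then 1 else 0)"
definition ps :: "nat \<Rightarrow> real" where
  "ps j = (if j = 0 then 1 else if j = 1 then 0 else if j = 2 then 2/5 else 3/5)"

lemma br_vals:
  assumes "best_response {0,1,2} uu ar"
  shows "ar (1/2) = 0" "ar 1 = 1" "ar 0 = 2" "ar (2/5) = 2" "ar (3/5) = 1"
proof -
  have h: "\<And>q. q \<in> {0..1} \<Longrightarrow> ar q \<in> {0,1,2} \<and> (\<forall>b\<in>{0,1,2}. exp_util uu b q \<le> exp_util uu (ar q) q)"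
    using assms unfolding best_response_def by blast
  show "ar (1/2) = 0" using h[of "1/2"] by (auto simp: exp_util_def uu_def)
  show "ar 1 = 1" using h[of "1"] by (auto simp: exp_util_def uu_def)
  show "ar 0 = 2" using h[of "0"] by (auto simp: exp_util_def uu_def)
  show "ar (2/5) = 2" using h[of "2/5"] by (auto simp: exp_util_def uu_def)
  show "ar (3/5) = 1" using h[of "3/5"] by (auto simp: exp_util_def uu_def)
qed

theorem theorem3p1:
  shows "\<exists>(A :: nat set) (u :: nat \<Rightarrow> nat \<Rightarrow> real) (c :: real).
           finite A \<and> A \<noteq> {} \<and> c > 0 \<and>
           (\<forall>a\<in>A. \<forall>y\<in>{0,1}. u a y \<in> {-1..1}) \<and>
           (\<forall>ar. best_response A u ar \<longrightarrow>
              infinite {T :: nat. \<exists>(x :: nat \<Rightarrow> nat) (p :: nat \<Rightarrow> real).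
                 (\<forall>t<T. x t \<in> {0,1} \<and> p t \<in> {0..1}) \<and>
                 Reg T p x \<le> - c * real T \<and>
                 AgentReg u ar T p x \<ge> c * real T})"
proof (intro exI[of _ "{0,1,2}"] exI[of _ uu] exI[of _ "1/20"] conjI allI impI)
  show "\<forall>a\<in>{0,1,2}. \<forall>y\<in>{0,1}. uu a y \<in> {-1..1}" by (auto simp: uu_def)
  fix ar assume br: "best_response {0,1,2} uu ar"
  note v = br_vals[OF br]
  let ?S = "{T :: nat. \<exists>(x :: nat \<Rightarrow> nat) (p :: nat \<Rightarrow> real).
                 (\<forall>t<T. x t \<in> {0,1} \<and> p t \<in> {0..1}) \<and>
                 Reg T p x \<le> - (1/20) * real T \<and>
                 AgentReg uu ar T p x \<ge> (1/20) * real T}"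
  have mem: "4 * Suc k0 \<in> ?S" for k0
  proof -
    define k where "k = Suc k0"
    have kp: "k > 0" by (simp add: k_def)
    define x where "x = (\<lambda>t. xs (t mod 4))"
    define p where "p = (\<lambda>t. ps (t mod 4))"
    have rng: "\<forall>t<4*k. x t \<in> {0,1} \<and> p t \<in> {0..1}"
      by (auto simp: x_def p_def xs_def ps_def)
    have "(\<Sum>t<4*k. real (x t)) = real k * 2"
      unfolding x_def using sum4[of "\<lambda>j. real (xs j)" k] by (simp add: xs_def)
    hence b: "base_rate (4*k) x = 1/2" using kp by (simp add: base_rate_def)
    have r1: "(\<Sum>t<4*k. brier (p t) (x t)) = real k * (18/25)"
      unfolding x_def p_def using sum4[of "\<lambda>j. brier (ps j) (xs j)" k]
      by (simp add: xs_def ps_def brier_def power2_eq_square)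
    have r2: "(\<Sum>t<4*k. brier (1/2) (x t)) = real k * 1"
      unfolding x_def using sum4[of "\<lambda>j. brier (1/2) (xs j)" k]
      by (simp add: xs_def brier_def power2_eq_square)
    have a1: "(\<Sum>t<4*k. uu (ar (1/2)) (x t)) = 0"
      using v by (simp add: uu_def)
    have a2: "(\<Sum>t<4*k. uu (ar (p t)) (x t)) = real k * (-1/5)"
      unfolding x_def p_def using sum4[of "\<lambda>j. uu (ar (ps j)) (xs j)" k] v
      by (simp add: xs_def ps_def uu_def)
    have "Reg (4*k) p x \<le> - (1/20) * real (4*k)"
      unfolding Reg_def b r1 r2 by simp
    moreover have "AgentReg uu ar (4*k) p x \<ge> (1/20) * real (4*k)"
      unfolding AgentReg_def b a1 a2 by simp
    ultimately have "4 * k \<in> ?S" unfolding mem_Collect_eq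
      by (intro exI[of _ x] exI[of _ p] conjI rng)
    thus "4 * Suc k0 \<in> ?S" unfolding k_def .
  qed
  have sub: "range (\<lambda>k. 4 * Suc k) \<subseteq> ?S" using mem by blast
  have "inj (\<lambda>k::nat. 4 * Suc k)" by (auto simp: inj_def)
  hence "infinite (range (\<lambda>k::nat. 4 * Suc k))" using finite_imageD by (metis infinite_UNIV_nat inj_on_subset subset_UNIV)
  thus "infinite ?S" using sub finite_subset by blast
qed simp_all

end
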